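(* Let $E$ be a pseudo effect algebra satisfying (RDP). If $m_1$ and $m_2$ are $\sigma$-additive measures on $E$, then so are $m_1\vee m_2$ and $m_1\wedge m_2$ (lattice operations in $\mathcal J(E)$).
   Context: Pseudo effect algebra: partial algebra $(E;+,0,1)$ such that for all $a,b,c$: (i) $a+b$ and $(a+b)+c$ exist iff $b+c$ and $a+(b+c)$ exist, and then they are equal; (ii) there is exactly one $d$ and one $e$ with $a+d=e+a=1$; (iii) if $a+b$ exists there are $d,e$ with $a+b=d+a=b+e$; (iv) if $1+a$ or $a+1$ exists then $a=0$. Order: $a\le b$ iff $a+c=b$ for some $c$. (RDP): whenever $a_1+a_2=b_1+b_2$ there are $d_1,\dots,d_4$ with $d_1+d_2=a_1$, $d_3+d_4=a_2$, $d_1+d_3=b_1$, $d_2+d_4=b_2$. Measure: $m:E\to[0,\infty)$ additive on defined sums. A signed measure $m$ is $\sigma$-additive if whenever $a_1\le a_2\le\cdots$ and $a=\bigvee_n a_n$ exists in $E$, $m(a)=\lim_n m(a_n)$; for a measure this is equivalent to: $a_n\searrow 0$ (decreasing with infimum $0$) implies $m(a_n)\to0$. $\mathcal J(E)$: signed measures that are differences of two measures, ordered by $m_1\le^+m_2$ iff $m_2-m_1$ is a measure (a lattice-ordered group under (RDP)). *)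

theory Defs
  imports Main "HOL-Library.Monad_Syntax" Complex_Main
begin

text \<open>A pseudo effect algebra on the whole type 'a: partial addition p
  (None = undefined), zero z, unit u.\<close>

definition pea :: "('a \<Rightarrow> 'a \<Rightarrow> 'a option) \<Rightarrow> 'a \<Rightarrow> 'a \<Rightarrow> bool" where
  "pea p z u \<longleftrightarrow>
     (\<forall>a b c. Option.bind (p a b) (\<lambda>x. p x c) = Option.bind (p b c) (\<lambda>y. p a y)) \<and>
     (\<forall>a. (\<exists>!d. p a d = Some u) \<and> (\<exists>!e. p e a = Some u)) \<and>
     (\<forall>a b s. p a b = Some s \<longrightarrow> (\<exists>d e. p d a = Some s \<and> p b e = Some s)) \<and>
     (\<forall>a. (p u a \<noteq> None \<or> p a u \<noteq> None) \<longrightarrow> a = z)"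

definition pea_le :: "('a \<Rightarrow> 'a \<Rightarrow> 'a option) \<Rightarrow> 'a \<Rightarrow> 'a \<Rightarrow> bool" where
  "pea_le p a b \<longleftrightarrow> (\<exists>c. p a c = Some b)"

definition RDP :: "('a \<Rightarrow> 'a \<Rightarrow> 'a option) \<Rightarrow> bool" where
  "RDP p \<longleftrightarrow> (\<forall>a1 a2 b1 b2 s. p a1 a2 = Some s \<and> p b1 b2 = Some s \<longrightarrow>
     (\<exists>d1 d2 d3 d4. p d1 d2 = Some a1 \<and> p d3 d4 = Some a2 \<and>
                    p d1 d3 = Some b1 \<and> p d2 d4 = Some b2))"

definition is_measure :: "('a \<Rightarrow> 'a \<Rightarrow> 'a option) \<Rightarrow> ('a \<Rightarrow> real) \<Rightarrow> bool" where
  "is_measure p m \<longleftrightarrow> (\<forall>a. 0 \<le> m a) \<and> (\<forall>a b c. p a b = Some c \<longrightarrow> m c = m a + m b)"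

definition pea_is_sup :: "('a \<Rightarrow> 'a \<Rightarrow> 'a option) \<Rightarrow> (nat \<Rightarrow> 'a) \<Rightarrow> 'a \<Rightarrow> bool" where
  "pea_is_sup p f a \<longleftrightarrow> (\<forall>n. pea_le p (f n) a) \<and>
     (\<forall>b. (\<forall>n. pea_le p (f n) b) \<longrightarrow> pea_le p a b)"

definition sigma_additive :: "('a \<Rightarrow> 'a \<Rightarrow> 'a option) \<Rightarrow> ('a \<Rightarrow> real) \<Rightarrow> bool" where
  "sigma_additive p m \<longleftrightarrow> (\<forall>f a. (\<forall>n. pea_le p (f n) (f (Suc n))) \<and> pea_is_sup p f a
       \<longrightarrow> (\<lambda>n. m (f n)) \<longlonglongrightarrow> m a)"

definition J :: "('a \<Rightarrow> 'a \<Rightarrow> 'a option) \<Rightarrow> ('a \<Rightarrow> real) set" where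
  "J p = {m. \<exists>\<mu> \<nu>. is_measure p \<mu> \<and> is_measure p \<nu> \<and> m = (\<lambda>x. \<mu> x - \<nu> x)}"

definition J_le :: "('a \<Rightarrow> 'a \<Rightarrow> 'a option) \<Rightarrow> ('a \<Rightarrow> real) \<Rightarrow> ('a \<Rightarrow> real) \<Rightarrow> bool" where
  "J_le p m1 m2 \<longleftrightarrow> is_measure p (\<lambda>x. m2 x - m1 x)"

definition J_sup :: "('a \<Rightarrow> 'a \<Rightarrow> 'a option) \<Rightarrow> ('a \<Rightarrow> real) \<Rightarrow> ('a \<Rightarrow> real) \<Rightarrow> ('a \<Rightarrow> real)" where
  "J_sup p m1 m2 = (THE m. m \<in> J p \<and> J_le p m1 m \<and> J_le p m2 m \<and>
      (\<forall>k\<in>J p. J_le p m1 k \<and> J_le p m2 k \<longrightarrow> J_le p m k))"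

definition J_inf :: "('a \<Rightarrow> 'a \<Rightarrow> 'a option) \<Rightarrow> ('a \<Rightarrow> real) \<Rightarrow> ('a \<Rightarrow> real) \<Rightarrow> ('a \<Rightarrow> real)" where
  "J_inf p m1 m2 = (THE m. m \<in> J p \<and> J_le p m m1 \<and> J_le p m m2 \<and>
      (\<forall>k\<in>J p. J_le p k m1 \<and> J_le p k m2 \<longrightarrow> J_le p k m))"

end

theory Submission
  imports Defs
begin

locale PE =
  fixes p :: "'a \<Rightarrow> 'a \<Rightarrow> 'a option" and z u :: 'a and m1 m2 :: "'a \<Rightarrow> real"
  assumes pea: "pea p z u" and rdp: "RDP p" and M1: "is_measure p m1" and M2: "is_measure p m2"
begin

lemma assoc1:
  assumes "p a b = Some x" "p x c = Some r"
  shows "\<exists>y. p b c = Some y \<and> p a y = Some r"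
proof -
  have "Option.bind (p a b) (\<lambda>x. p x c) = Option.bind (p b c) (\<lambda>y. p a y)"
    using pea unfolding pea_def by blast
  with assms show ?thesis by (cases "p b c") auto
qed

lemma assoc2:
  assumes "p b c = Some y" "p a y = Some r"
  shows "\<exists>x. p a b = Some x \<and> p x c = Some r"
proof -
  have "Option.bind (p a b) (\<lambda>x. p x c) = Option.bind (p b c) (\<lambda>y. p a y)"
    using pea unfolding pea_def by blast
  with assms show ?thesis by (cases "p a b") auto
qed

lemma ex1r: "\<exists>!d. p a d = Some u" using pea unfolding pea_def by blast
lemma ex1l: "\<exists>!e. p e a = Some u" using pea unfolding pea_def by blast
lemma ax4: "p u a \<noteq> None \<or> p a u \<noteq> None \<Longrightarrow> a = z" using pea unfolding pea_def by blast
lemma comm: "p a b = Some s \<Longrightarrow> \<exists>d. p d a = Some s" using pea unfolding pea_def by blast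

lemma unit_r: "p u z = Some u"
proof -
  obtain d where "p u d = Some u" using ex1r by blast
  moreover then have "d = z" using ax4 by auto
  ultimately show ?thesis by simp
qed

lemma unit_l: "p z u = Some u"
proof -
  obtain d where "p d u = Some u" using ex1l by blast
  moreover then have "d = z" using ax4 by auto
  ultimately show ?thesis by simp
qed

lemma zero_r: "p b z = Some b"
proof -
  obtain e where e: "p e b = Some u" using ex1l by blast
  then obtain y where y: "p b z = Some y" "p e y = Some u" using assoc1[OF e unit_r] by blast
  have "y = b" using ex1r[of e] e y by blast
  with y show ?thesis by simp
qed

lemma zero_l: "p z b = Some b"
proof -
  obtain d where d: "p b d = Some u" using ex1r by blast
  then obtain x where x: "p z b = Some x" "p x d = Some u" using assoc2[OF d unit_l] by blast
  have "x = b" using ex1l[of d] d x by blast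
  with x show ?thesis by simp
qed

lemma madd: "is_measure p m \<Longrightarrow> p a b = Some c \<Longrightarrow> m c = m a + m b"
  unfolding is_measure_def by blast
lemma mpos: "is_measure p m \<Longrightarrow> 0 \<le> m a"
  unfolding is_measure_def by blast
lemma mz: "is_measure p m \<Longrightarrow> m z = 0"
  using madd[of m z z z] zero_r[of z] by simp
lemma mle: "is_measure p m \<Longrightarrow> pea_le p a b \<Longrightarrow> m a \<le> m b"
  unfolding pea_le_def using madd mpos by fastforce

definition D where "D a = {m1 a1 + m2 a2 | a1 a2. p a1 a2 = Some a}"
definition s where "s a = Sup (D a)"

lemma D_ne: "D a \<noteq> {}"
  unfolding D_def using zero_r[of a] by blast

lemma D_bound: "x \<in> D a \<Longrightarrow> x \<le> m1 a + m2 a"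
proof -
  assume "x \<in> D a"
  then obtain a1 a2 where "p a1 a2 = Some a" "x = m1 a1 + m2 a2" unfolding D_def by blast
  with madd[OF M1] madd[OF M2] mpos[OF M1, of a2] mpos[OF M2, of a1] show ?thesis by fastforce
qed

lemma bdd: "bdd_above (D a)"
  using D_bound by (meson bdd_above.I)

lemma s_ge: "x \<in> D a \<Longrightarrow> x \<le> s a"
  unfolding s_def using bdd cSup_upper by blast

lemma inD: "p a1 a2 = Some a \<Longrightarrow> m1 a1 + m2 a2 \<in> D a"
  unfolding D_def by blast

lemma s_ge_m1: "m1 a \<le> s a"
  using s_ge[OF inD[OF zero_r[of a]]] mz[OF M2] by simp
lemma s_ge_m2: "m2 a \<le> s a"
  using s_ge[OF inD[OF zero_l[of a]]] mz[OF M1] by simp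
lemma s_le_sum: "s a \<le> m1 a + m2 a"
  unfolding s_def using D_ne D_bound by (meson cSup_least)

lemma s_least:
  assumes "\<forall>a b c. p a b = Some c \<longrightarrow> k c = k a + k b"
    and "\<forall>x. m1 x \<le> k x" and "\<forall>x. m2 x \<le> k x"
  shows "s a \<le> k a"
  unfolding s_def
proof (rule cSup_least[OF D_ne])
  fix x assume "x \<in> D a"
  then obtain a1 a2 where "p a1 a2 = Some a" "x = m1 a1 + m2 a2" unfolding D_def by blast
  note h = this
  have "k a = k a1 + k a2" using assms(1) h(1) by blast
  moreover have "m1 a1 \<le> k a1" "m2 a2 \<le> k a2" using assms(2,3) by blast+
  ultimately show "x \<le> k a" using h(2) by linarith
qed

lemma s_le_add:
  assumes c: "p a b = Some c"
  shows "s c \<le> s a + s b"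
  unfolding s_def[of c]
proof (rule cSup_least[OF D_ne])
  fix x assume "x \<in> D c"
  then obtain c1 c2 where cc: "p c1 c2 = Some c" "x = m1 c1 + m2 c2" unfolding D_def by blast
  then obtain d1 d2 d3 d4 where d: "p d1 d2 = Some c1" "p d3 d4 = Some c2"
    "p d1 d3 = Some a" "p d2 d4 = Some b"
    using rdp c unfolding RDP_def by blast
  have "m1 d1 + m2 d3 \<le> s a" using s_ge[OF inD[OF d(3)]] .
  moreover have "m1 d2 + m2 d4 \<le> s b" using s_ge[OF inD[OF d(4)]] .
  moreover have "m1 c1 = m1 d1 + m1 d2" using madd[OF M1 d(1)] .
  moreover have "m2 c2 = m2 d3 + m2 d4" using madd[OF M2 d(2)] .
  ultimately show "x \<le> s a + s b" using cc by simp
qed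

lemma split_add:
  assumes c: "p a b = Some c" and a: "p a1 a2 = Some a" and b: "p b1 b2 = Some b"
  shows "m1 a1 + m2 a2 + (m1 b1 + m2 b2) \<in> D c"
proof -
  obtain y where y: "p a2 b = Some y" "p a1 y = Some c" using assoc1[OF a c] by blast
  obtain w where w: "p a2 b1 = Some w" "p w b2 = Some y" using assoc2[OF b y(1)] by blast
  obtain b1' where b1': "p b1' a2 = Some w" using comm[OF w(1)] by blast
  have e1: "m1 b1' = m1 b1" using madd[OF M1 w(1)] madd[OF M1 b1'] by simp
  obtain v where v: "p a2 b2 = Some v" "p b1' v = Some y" using assoc1[OF b1' w(2)] by blast
  obtain t where t: "p a1 b1' = Some t" "p t v = Some c" using assoc2[OF v(2) y(2)] by blast
  have "m1 t + m2 v \<in> D c" using inD[OF t(2)] .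
  moreover have "m1 t = m1 a1 + m1 b1" using madd[OF M1 t(1)] e1 by simp
  moreover have "m2 v = m2 a2 + m2 b2" using madd[OF M2 v(1)] .
  ultimately show ?thesis by (simp add: algebra_simps)
qed

lemma s_ge_add:
  assumes c: "p a b = Some c"
  shows "s a + s b \<le> s c"
proof -
  have "s a \<le> s c - s b"
    unfolding s_def[of a]
  proof (rule cSup_least[OF D_ne])
    fix x assume "x \<in> D a"
    then obtain a1 a2 where aa: "p a1 a2 = Some a" "x = m1 a1 + m2 a2" unfolding D_def by blast
    have "s b \<le> s c - x"
      unfolding s_def[of b]
    proof (rule cSup_least[OF D_ne])
      fix y assume "y \<in> D b"
      then obtain b1 b2 where bb: "p b1 b2 = Some b" "y = m1 b1 + m2 b2" unfolding D_def by blast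
      have "x + y \<le> s c" using s_ge[OF split_add[OF c aa(1) bb(1)]] aa bb by simp
      then show "y \<le> s c - x" by simp
    qed
    then show "x \<le> s c - s b" by simp
  qed
  then show ?thesis by simp
qed

lemma s_add: "p a b = Some c \<Longrightarrow> s c = s a + s b"
  using s_le_add s_ge_add by fastforce

lemma s_meas: "is_measure p s"
  unfolding is_measure_def using s_add s_ge_m1 mpos[OF M1] by (meson order_trans)

definition addf :: "('a \<Rightarrow> real) \<Rightarrow> bool" where "addf f \<longleftrightarrow> (\<forall>a b c. p a b = Some c \<longrightarrow> f c = f a + f b)"

lemma meas_diff:
  assumes "addf f" "addf g" "\<And>x. g x \<le> f x"
  shows "is_measure p (\<lambda>x. f x - g x)"
  unfolding is_measure_def
proof (intro conjI allI impI)
  fix x show "0 \<le> f x - g x" using assms(3)[of x] by simp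
next
  fix a b c assume "p a b = Some c"
  then have "f c = f a + f b" "g c = g a + g b" using assms(1,2) unfolding addf_def by blast+
  then show "f c - g c = f a - g a + (f b - g b)" by simp
qed

lemma addf_meas: "is_measure p m \<Longrightarrow> addf m"
  unfolding addf_def is_measure_def by blast

lemma addf_J: "k \<in> J p \<Longrightarrow> addf k"
  unfolding J_def addf_def is_measure_def by force

lemma addf_s: "addf s" unfolding addf_def using s_add by blast
lemma addf_m1: "addf m1" using addf_meas[OF M1] .
lemma addf_m2: "addf m2" using addf_meas[OF M2] .
lemma addf_0: "addf (\<lambda>_. 0)" unfolding addf_def by simp

lemma addf_lin: "addf f \<Longrightarrow> addf g \<Longrightarrow> addf h \<Longrightarrow> addf (\<lambda>x. f x + g x - h x)"
  unfolding addf_def by simp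

lemma J_le_ge: "J_le p f g \<Longrightarrow> f x \<le> g x"
  unfolding J_le_def is_measure_def by (metis diff_ge_0_iff_ge)

lemma s_least': "addf k \<Longrightarrow> (\<And>x. m1 x \<le> k x) \<Longrightarrow> (\<And>x. m2 x \<le> k x) \<Longrightarrow> s a \<le> k a"
  by (rule s_least) (auto simp: addf_def)

lemma meas0: "is_measure p (\<lambda>_. 0)" by (simp add: is_measure_def)

lemma J_sup_eq: "J_sup p m1 m2 = s"
proof -
  let ?P = "\<lambda>m. m \<in> J p \<and> J_le p m1 m \<and> J_le p m2 m \<and>
      (\<forall>k\<in>J p. J_le p m1 k \<and> J_le p m2 k \<longrightarrow> J_le p m k)"
  have Ps: "?P s"
  proof (intro conjI ballI impI)
    have "s = (\<lambda>x. s x - 0)" by simp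
    then show "s \<in> J p" unfolding J_def using s_meas meas0 by blast
    show "J_le p m1 s" unfolding J_le_def by (rule meas_diff[OF addf_s addf_m1 s_ge_m1])
    show "J_le p m2 s" unfolding J_le_def by (rule meas_diff[OF addf_s addf_m2 s_ge_m2])
    fix k assume k: "k \<in> J p" and kk: "J_le p m1 k \<and> J_le p m2 k"
    have "s x \<le> k x" for x
      by (rule s_least'[OF addf_J[OF k]]) (use kk J_le_ge in blast)+
    then show "J_le p s k" unfolding J_le_def by (rule meas_diff[OF addf_J[OF k] addf_s])
  qed
  have "m = s" if Pm: "?P m" for m
  proof -
    have 1: "J_le p m s" using Ps Pm by blast
    have 2: "J_le p s m" using Ps Pm by blast
    show "m = s" using J_le_ge[OF 1] J_le_ge[OF 2] by (intro ext) (meson antisym)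
  qed
  then show ?thesis unfolding J_sup_def using Ps by (intro the_equality) blast+
qed

definition i where "i x = m1 x + m2 x - s x"

lemma addf_i: "addf i" unfolding i_def by (rule addf_lin[OF addf_m1 addf_m2 addf_s])

lemma J_inf_eq: "J_inf p m1 m2 = i"
proof -
  let ?P = "\<lambda>m. m \<in> J p \<and> J_le p m m1 \<and> J_le p m m2 \<and>
      (\<forall>k\<in>J p. J_le p k m1 \<and> J_le p k m2 \<longrightarrow> J_le p k m)"
  have Pi: "?P i"
  proof (intro conjI ballI impI)
    have sm: "is_measure p (\<lambda>x. m1 x + m2 x)"
      using M1 M2 unfolding is_measure_def by (auto simp: add_nonneg_nonneg)
    have "i = (\<lambda>x. (m1 x + m2 x) - s x)" unfolding i_def by simp
    then show "i \<in> J p" unfolding J_def using sm s_meas by blast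
    have "(\<lambda>x. m1 x - i x) = (\<lambda>x. s x - m2 x)" unfolding i_def by auto
    moreover have "is_measure p (\<lambda>x. s x - m2 x)" by (rule meas_diff[OF addf_s addf_m2 s_ge_m2])
    ultimately show "J_le p i m1" unfolding J_le_def by simp
    have "(\<lambda>x. m2 x - i x) = (\<lambda>x. s x - m1 x)" unfolding i_def by auto
    moreover have "is_measure p (\<lambda>x. s x - m1 x)" by (rule meas_diff[OF addf_s addf_m1 s_ge_m1])
    ultimately show "J_le p i m2" unfolding J_le_def by simp
    fix k assume k: "k \<in> J p" and kk: "J_le p k m1 \<and> J_le p k m2"
    have k1: "k x \<le> m1 x" "k x \<le> m2 x" for x using kk J_le_ge by blast+
    have sk: "s x \<le> m1 x + m2 x - k x" for x
      by (rule s_least'[OF addf_lin[OF addf_m1 addf_m2 addf_J[OF k]]]) (use k1 in force)+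
    have "k x \<le> i x" for x using sk[of x] unfolding i_def by linarith
    then show "J_le p k i" unfolding J_le_def by (rule meas_diff[OF addf_i addf_J[OF k]])
  qed
  have "m = i" if Pm: "?P m" for m
  proof -
    have 1: "J_le p m i" using Pi Pm by blast
    have 2: "J_le p i m" using Pi Pm by blast
    show "m = i" using J_le_ge[OF 1] J_le_ge[OF 2] by (intro ext) (meson antisym)
  qed
  then show ?thesis unfolding J_inf_def using Pi by (intro the_equality) blast+
qed

lemma i_meas: "is_measure p i"
  unfolding is_measure_def i_def using s_le_sum s_add madd[OF M1] madd[OF M2] by simp

lemma s_sigma:
  assumes S1: "sigma_additive p m1" and S2: "sigma_additive p m2"
  shows "sigma_additive p s"
  unfolding sigma_additive_def
proof (intro allI impI)
  fix f a assume fa: "(\<forall>n. pea_le p (f n) (f (Suc n))) \<and> pea_is_sup p f a"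
  have L1: "(\<lambda>n. m1 (f n)) \<longlonglongrightarrow> m1 a" using S1 fa unfolding sigma_additive_def by blast
  have L2: "(\<lambda>n. m2 (f n)) \<longlonglongrightarrow> m2 a" using S2 fa unfolding sigma_additive_def by blast
  have le: "pea_le p (f n) a" for n using fa unfolding pea_is_sup_def by blast
  have up: "s (f n) \<le> s a" for n using mle[OF s_meas le] .
  have low: "s a - (m1 a + m2 a - (m1 (f n) + m2 (f n))) \<le> s (f n)" for n
  proof -
    obtain c where c: "p (f n) c = Some a" using le[of n] unfolding pea_le_def by blast
    have "s a \<le> s (f n) + (m1 a + m2 a - (m1 (f n) + m2 (f n)))"
      unfolding s_def[of a]
    proof (rule cSup_least[OF D_ne])
      fix x assume "x \<in> D a"
      then obtain a1 a2 where aa: "p a1 a2 = Some a" "x = m1 a1 + m2 a2" unfolding D_def by blast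
      then obtain d1 d2 d3 d4 where d: "p d1 d2 = Some a1" "p d3 d4 = Some a2"
        "p d1 d3 = Some (f n)" "p d2 d4 = Some c"
        using rdp c unfolding RDP_def by blast
      have "m1 d1 + m2 d3 \<le> s (f n)" using s_ge[OF inD[OF d(3)]] .
      moreover have "m1 a1 = m1 d1 + m1 d2" using madd[OF M1 d(1)] .
      moreover have "m2 a2 = m2 d3 + m2 d4" using madd[OF M2 d(2)] .
      moreover have "m1 c = m1 d2 + m1 d4" using madd[OF M1 d(4)] .
      moreover have "m2 c = m2 d2 + m2 d4" using madd[OF M2 d(4)] .
      moreover have "m1 a = m1 (f n) + m1 c" using madd[OF M1 c] .
      moreover have "m2 a = m2 (f n) + m2 c" using madd[OF M2 c] .
      moreover have "0 \<le> m1 d4" "0 \<le> m2 d2" using mpos[OF M1] mpos[OF M2] by auto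
      ultimately show "x \<le> s (f n) + (m1 a + m2 a - (m1 (f n) + m2 (f n)))" using aa by simp
    qed
    then show ?thesis by simp
  qed
  have "(\<lambda>n. s a - (m1 a + m2 a - (m1 (f n) + m2 (f n)))) \<longlonglongrightarrow> s a - (m1 a + m2 a - (m1 a + m2 a))"
    by (intro tendsto_intros L1 L2)
  then have LL: "(\<lambda>n. s a - (m1 a + m2 a - (m1 (f n) + m2 (f n)))) \<longlonglongrightarrow> s a" by simp
  show "(\<lambda>n. s (f n)) \<longlonglongrightarrow> s a"
    by (rule tendsto_sandwich[OF _ _ LL tendsto_const]) (auto simp: low up)
qed

lemma i_sigma:
  assumes S1: "sigma_additive p m1" and S2: "sigma_additive p m2"
  shows "sigma_additive p i"
  unfolding sigma_additive_def i_def
proof (intro allI impI)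
  fix f a assume fa: "(\<forall>n. pea_le p (f n) (f (Suc n))) \<and> pea_is_sup p f a"
  have L1: "(\<lambda>n. m1 (f n)) \<longlonglongrightarrow> m1 a" using S1 fa unfolding sigma_additive_def by blast
  have L2: "(\<lambda>n. m2 (f n)) \<longlonglongrightarrow> m2 a" using S2 fa unfolding sigma_additive_def by blast
  have L3: "(\<lambda>n. s (f n)) \<longlonglongrightarrow> s a" using s_sigma[OF S1 S2] fa unfolding sigma_additive_def by blast
  show "(\<lambda>n. m1 (f n) + m2 (f n) - s (f n)) \<longlonglongrightarrow> m1 a + m2 a - s a"
    by (intro tendsto_intros L1 L2 L3)
qed

end

theorem proposition4p4:
  fixes p :: "'a \<Rightarrow> 'a \<Rightarrow> 'a option" and z u :: 'a and m1 m2 :: "'a \<Rightarrow> real"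
  assumes "pea p z u" and "RDP p"
    and "is_measure p m1" and "sigma_additive p m1"
    and "is_measure p m2" and "sigma_additive p m2"
  shows "is_measure p (J_sup p m1 m2) \<and> sigma_additive p (J_sup p m1 m2) \<and>
         is_measure p (J_inf p m1 m2) \<and> sigma_additive p (J_inf p m1 m2)"
proof -
  interpret PE p z u m1 m2 using assms by unfold_locales
  show ?thesis unfolding J_sup_eq J_inf_eq using s_meas i_meas s_sigma i_sigma assms(4,6) by blast
qed

end
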